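(* Consider the averaged switched RLC circuit $$-L\dot I=RI+\Gamma(u)V-B(u)V_s,\qquad C\dot V=\Gamma(u)^\top I-GV,$$ where $\Gamma(u)=u\Gamma_1+(1-u)\Gamma_0$, $B(u)=uB_1+(1-u)B_0$, $u\in[0,1]$ is the duty cycle and $V_s\in\mathbb{R}^m$ is a constant voltage source, together with its extended dynamics $$-L\ddot I=R\dot I+\Gamma(u)\dot V+\big((\Gamma_1-\Gamma_0)V-(B_1-B_0)V_s\big)\upsilon,\quad C\ddot V=\Gamma(u)^\top\dot I+(\Gamma_1-\Gamma_0)^\top I\,\upsilon-G\dot V,\quad \dot u=\upsilon,$$ with extended state $(I,V,\dot I,\dot V,u)$ and input $\upsilon\in\mathbb{R}$. Assume $L,C$ are constant symmetric positive definite and $R,G$ are symmetric positive semi-definite. Then the extended system is passive with respect to the storage function $S=\tfrac12\dot I^\top L\dot I+\tfrac12\dot V^\top C\dot V$ and the port-variables $\upsilon$ and $$y=\dot V^\top(\Gamma_1-\Gamma_0)^\top I-\dot I^\top(\Gamma_1-\Gamma_0)V-\dot I^\top(B_0-B_1)V_s,$$ i.e. $\dot S\le \upsilon\, y$ along trajectories.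
   Context: $I\in\mathbb{R}^\sigma$ (inductor currents), $V\in\mathbb{R}^\rho$ (capacitor voltages), $L\in\mathbb{R}^{\sigma\times\sigma}$, $C\in\mathbb{R}^{\rho\times\rho}$, $R\in\mathbb{R}^{\sigma\times\sigma}$, $G\in\mathbb{R}^{\rho\times\rho}$, $\Gamma_0,\Gamma_1\in\mathbb{R}^{\sigma\times\rho}$, $B_0,B_1\in\mathbb{R}^{\sigma\times m}$ constant. Passivity with respect to storage $S\ge0$ and port-variables (input $a$, output $b$) means $\dot S\le a^\top b$ along trajectories. *)

theory Defs
  imports "HOL-Analysis.Analysis"
begin

definition sym_mat :: "real^'n^'n \<Rightarrow> bool" where
  "sym_mat A \<longleftrightarrow> transpose A = A"

definition pos_def_mat :: "real^'n^'n \<Rightarrow> bool" where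
  "pos_def_mat A \<longleftrightarrow> sym_mat A \<and> (\<forall>x. x \<noteq> 0 \<longrightarrow> x \<bullet> (A *v x) > 0)"

definition pos_semidef_mat :: "real^'n^'n \<Rightarrow> bool" where
  "pos_semidef_mat A \<longleftrightarrow> sym_mat A \<and> (\<forall>x. x \<bullet> (A *v x) \<ge> 0)"

end

theory Submission
  imports Defs
begin

lemma trdot: "x \<bullet> (transpose A *v y) = y \<bullet> (A *v (x::real^'n))"
proof -
  have "x \<bullet> (transpose A *v y) = (y v* A) \<bullet> x" by (simp add: transpose_matrix_vector inner_commute)
  then show ?thesis by (simp add: dot_lmul_matrix)
qed
lemma symdot: "sym_mat A \<Longrightarrow> x \<bullet> (A *v y) = y \<bullet> (A *v (x::real^'n))"
  unfolding sym_mat_def using trdot[of x A y] by simp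
lemma dq: assumes "sym_mat A" "(f has_vector_derivative f') (at t within T)"
  shows "((\<lambda>\<tau>. f \<tau> \<bullet> (A *v f \<tau>)) has_real_derivative 2 * (f t \<bullet> (A *v f'))) (at t within T)"
proof -
  have l: "bounded_linear ((*v) A)" by (rule matrix_vector_mul_bounded_linear)
  have h2: "((\<lambda>\<tau>. A *v f \<tau>) has_vector_derivative A *v f') (at t within T)"
    using bounded_linear.has_vector_derivative[OF l assms(2)] .
  have "((\<lambda>\<tau>. f \<tau> \<bullet> (A *v f \<tau>)) has_derivative (\<lambda>h. f t \<bullet> (h *\<^sub>R (A *v f')) + (h *\<^sub>R f') \<bullet> (A *v f t))) (at t within T)"
    by (rule has_derivative_inner[OF assms(2)[unfolded has_vector_derivative_def] h2[unfolded has_vector_derivative_def]])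
  note h3 = this
  have eq: "f' \<bullet> (A *v f t) = f t \<bullet> (A *v f')" using symdot[OF assms(1), of f' "f t"] .
  from h3 show ?thesis
    unfolding has_field_derivative_def
    by (rule has_derivative_eq_rhs) (simp add: fun_eq_iff eq algebra_simps)
qed

lemma arith_aux: "(a::real) \<ge> 0 \<Longrightarrow> g \<ge> 0 \<Longrightarrow> - a - x - v * p + v * q + (x + v * r - g) \<le> v * (r - p - - q)"
  by (simp add: algebra_simps)

theorem proposition2:
  fixes L R :: "real^'s^'s" and C G :: "real^'r^'r"
    and \<Gamma>0 \<Gamma>1 :: "real^'r^'s" and B0 B1 :: "real^'m^'s" and Vs :: "real^'m"
    and T :: "real set"
    and I Id Idd :: "real \<Rightarrow> real^'s" and V Vd Vdd :: "real \<Rightarrow> real^'r"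
    and u \<upsilon> :: "real \<Rightarrow> real"
  assumes L: "pos_def_mat L" and C: "pos_def_mat C"
    and R: "pos_semidef_mat R" and G: "pos_semidef_mat G"
    and u_range: "\<And>t. t \<in> T \<Longrightarrow> u t \<in> {0..1}"
    and dI: "\<And>t. t \<in> T \<Longrightarrow> (I has_vector_derivative Id t) (at t within T)"
    and dV: "\<And>t. t \<in> T \<Longrightarrow> (V has_vector_derivative Vd t) (at t within T)"
    and dId: "\<And>t. t \<in> T \<Longrightarrow> (Id has_vector_derivative Idd t) (at t within T)"
    and dVd: "\<And>t. t \<in> T \<Longrightarrow> (Vd has_vector_derivative Vdd t) (at t within T)"
    and du: "\<And>t. t \<in> T \<Longrightarrow> (u has_real_derivative \<upsilon> t) (at t within T)"
    and eqI: "\<And>t. t \<in> T \<Longrightarrow>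
        - (L *v Idd t) = R *v Id t + (u t *\<^sub>R \<Gamma>1 + (1 - u t) *\<^sub>R \<Gamma>0) *v Vd t
          + \<upsilon> t *\<^sub>R ((\<Gamma>1 - \<Gamma>0) *v V t - (B1 - B0) *v Vs)"
    and eqV: "\<And>t. t \<in> T \<Longrightarrow>
        C *v Vdd t = transpose (u t *\<^sub>R \<Gamma>1 + (1 - u t) *\<^sub>R \<Gamma>0) *v Id t
          + \<upsilon> t *\<^sub>R (transpose (\<Gamma>1 - \<Gamma>0) *v I t) - G *v Vd t"
  shows "\<forall>t\<in>T. \<exists>D.
     ((\<lambda>\<tau>. (1/2) * (Id \<tau> \<bullet> (L *v Id \<tau>)) + (1/2) * (Vd \<tau> \<bullet> (C *v Vd \<tau>)))
        has_real_derivative D) (at t within T)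
     \<and> D \<le> \<upsilon> t * (Vd t \<bullet> (transpose (\<Gamma>1 - \<Gamma>0) *v I t)
                    - Id t \<bullet> ((\<Gamma>1 - \<Gamma>0) *v V t)
                    - Id t \<bullet> ((B0 - B1) *v Vs))"
proof
  fix t assume t: "t \<in> T"
  have sL: "sym_mat L" using L by (simp add: pos_def_mat_def)
  have sC: "sym_mat C" using C by (simp add: pos_def_mat_def)
  have pR: "Id t \<bullet> (R *v Id t) \<ge> 0" using R by (simp add: pos_semidef_mat_def)
  have pG: "Vd t \<bullet> (G *v Vd t) \<ge> 0" using G by (simp add: pos_semidef_mat_def)
  define D where "D = Id t \<bullet> (L *v Idd t) + Vd t \<bullet> (C *v Vdd t)"
  have der: "((\<lambda>\<tau>. (1/2) * (Id \<tau> \<bullet> (L *v Id \<tau>)) + (1/2) * (Vd \<tau> \<bullet> (C *v Vd \<tau>)))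
        has_real_derivative D) (at t within T)"
    using DERIV_add[OF DERIV_cmult[OF dq[OF sL dId[OF t]], of "1/2"] DERIV_cmult[OF dq[OF sC dVd[OF t]], of "1/2"]]
    by (simp add: D_def)
  define Gu where "Gu = u t *\<^sub>R \<Gamma>1 + (1 - u t) *\<^sub>R \<Gamma>0"
  have e1: "Id t \<bullet> (L *v Idd t) = - (Id t \<bullet> (R *v Id t)) - Id t \<bullet> (Gu *v Vd t)
      - \<upsilon> t * (Id t \<bullet> ((\<Gamma>1 - \<Gamma>0) *v V t)) + \<upsilon> t * (Id t \<bullet> ((B1 - B0) *v Vs))"
  proof -
    have "Id t \<bullet> (L *v Idd t) = - (Id t \<bullet> (- (L *v Idd t)))" by simp
    also have "\<dots> = - (Id t \<bullet> (R *v Id t + Gu *v Vd t + \<upsilon> t *\<^sub>R ((\<Gamma>1 - \<Gamma>0) *v V t - (B1 - B0) *v Vs)))"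
      using eqI[OF t] by (simp add: Gu_def)
    finally show ?thesis by (simp add: inner_add_right inner_diff_right algebra_simps)
  qed
  have e2: "Vd t \<bullet> (C *v Vdd t) = Id t \<bullet> (Gu *v Vd t) + \<upsilon> t * (Vd t \<bullet> (transpose (\<Gamma>1 - \<Gamma>0) *v I t))
      - Vd t \<bullet> (G *v Vd t)"
    using eqV[OF t] using trdot[of "Vd t" Gu "Id t"] trdot[of "Vd t" "\<Gamma>1 - \<Gamma>0" "I t"] by (simp add: Gu_def[symmetric] inner_add_right inner_diff_right del: transpose_matrix_vector)
  have e3: "Id t \<bullet> ((B0 - B1) *v Vs) = - (Id t \<bullet> ((B1 - B0) *v Vs))"
    proof -
    have "(B0 - B1) *v Vs = - ((B1 - B0) *v Vs)" by (simp add: matrix_vector_mult_diff_rdistrib)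
    then show ?thesis by simp
  qed
  have "D \<le> \<upsilon> t * (Vd t \<bullet> (transpose (\<Gamma>1 - \<Gamma>0) *v I t)
                    - Id t \<bullet> ((\<Gamma>1 - \<Gamma>0) *v V t)
                    - Id t \<bullet> ((B0 - B1) *v Vs))"
    unfolding D_def e1 e2 e3 by (rule arith_aux[OF pR pG])
  with der show "\<exists>D. ((\<lambda>\<tau>. (1/2) * (Id \<tau> \<bullet> (L *v Id \<tau>)) + (1/2) * (Vd \<tau> \<bullet> (C *v Vd \<tau>)))
        has_real_derivative D) (at t within T)
     \<and> D \<le> \<upsilon> t * (Vd t \<bullet> (transpose (\<Gamma>1 - \<Gamma>0) *v I t)
                    - Id t \<bullet> ((\<Gamma>1 - \<Gamma>0) *v V t)
                    - Id t \<bullet> ((B0 - B1) *v Vs))" by (intro exI[of _ D] conjI)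
qed

end
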